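(* Let $K,L,N$ be positive integers, $M=K/\gcd(K,L)$, and write $L=\prod_p p^{\lambda_p}$, $N=\prod_p p^{\nu_p}$. Let $f_1,\dots,f_n$ and $d_1,\dots,d_n$ be integers such that both $\prod_i f_i$ and $\prod_i (f_i-d_iK)$ are divisible by $N$. Suppose that for every prime $p$ dividing $M$ with $\lambda_p<\nu_p$ there exist integers $0\le\alpha_{i,p}\le\lambda_p$ ($i=1,\dots,n$) such that $p^{\alpha_{i,p}}\mid f_i$ for each $i$ and $\sum_i\alpha_{i,p}\ge\nu_p$. Then $$\frac{\prod_i f_i}{N}\equiv\frac{\prod_i(f_i-d_iK)}{N}\pmod M.$$ *)

theory Defs
  imports "HOL-Number_Theory.Number_Theory"
begin

end

theory Submission
  imports Defs
begin

lemma prod_diff_dvd: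
  fixes a u v :: "nat \<Rightarrow> int"
  assumes "\<forall>i<n. m dvd u i - v i"
  shows "(\<Prod>i<n. a i) * m dvd (\<Prod>i<n. a i * u i) - (\<Prod>i<n. a i * v i)"
  using assms
proof (induction n)
  case 0
  then show ?case by simp
next
  case (Suc n)
  define X where "X = (\<Prod>i<n. a i * u i)"
  define Y where "Y = (\<Prod>i<n. a i * v i)"
  define P where "P = (\<Prod>i<n. a i)"
  have IH: "P * m dvd X - Y" using Suc unfolding P_def X_def Y_def by auto
  have PX: "P dvd X" unfolding P_def X_def by (simp add: prod.distrib)
  have mn: "m dvd u n - v n" using Suc.prems by auto
  have eq: "X * (a n * u n) - Y * (a n * v n) = (X * a n) * (u n - v n) + (X - Y) * (a n * v n)"
    by (simp add: algebra_simps)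
  have d1: "(P * a n) * m dvd (X * a n) * (u n - v n)"
    using PX mn by (simp add: mult_dvd_mono)
  have d2: "(P * a n) * m dvd (X - Y) * (a n * v n)"
  proof -
    have "(P * m) * a n dvd (X - Y) * a n" using IH by (simp add: mult_dvd_mono)
    then have "(P * m) * a n dvd (X - Y) * a n * v n" by (rule dvd_mult2)
    then show ?thesis by (simp add: algebra_simps)
  qed
  have "(P * a n) * m dvd X * (a n * u n) - Y * (a n * v n)"
    unfolding eq using d1 d2 by (rule dvd_add)
  then show ?case by (simp add: P_def X_def Y_def)
qed

theorem fact1:
  fixes K L N n :: nat and f d :: "nat \<Rightarrow> int"
  assumes "K > 0" and "L > 0" and "N > 0"
    and "int N dvd (\<Prod>i<n. f i)"
    and "int N dvd (\<Prod>i<n. f i - d i * int K)"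
    and "\<forall>p. prime p \<and> p dvd (K div gcd K L) \<and> multiplicity p L < multiplicity p N \<longrightarrow>
           (\<exists>\<alpha> :: nat \<Rightarrow> nat. (\<forall>i<n. \<alpha> i \<le> multiplicity p L \<and> int p ^ \<alpha> i dvd f i)
                 \<and> (\<Sum>i<n. \<alpha> i) \<ge> multiplicity p N)"
  shows "[(\<Prod>i<n. f i) div int N = (\<Prod>i<n. f i - d i * int K) div int N] (mod int (K div gcd K L))"
proof -
  define M where "M = K div gcd K L"
  define A where "A = (\<Prod>i<n. f i)"
  define B where "B = (\<Prod>i<n. f i - d i * int K)"
  have gpos: "gcd K L > 0" using assms(1) by simp
  have KM: "K = M * gcd K L" unfolding M_def by simp
  have Mpos: "M > 0"
  proof (rule ccontr)
    assume "\<not> M > 0"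
    then have "M = 0" by simp
    with KM assms(1) show False by simp
  qed
  have AB: "int K dvd A - B"
  proof -
    have "[A = B] (mod int K)" unfolding A_def B_def
      by (rule cong_prod) (simp add: cong_iff_dvd_diff)
    then show ?thesis by (simp add: cong_iff_dvd_diff)
  qed
  have key: "int p ^ (multiplicity p N + multiplicity p M) dvd A - B" if pp: "prime p" for p
  proof -
    define \<nu> where "\<nu> = multiplicity p N"
    define \<mu> where "\<mu> = multiplicity p M"
    define lam where "lam = multiplicity p L"
    define \<gamma> where "\<gamma> = multiplicity p (gcd K L)"
    define \<kappa> where "\<kappa> = multiplicity p K"
    have kap: "\<kappa> = \<mu> + \<gamma>" unfolding \<kappa>_def \<mu>_def \<gamma>_def
      using KM prime_elem_multiplicity_mult_distrib[of p M "gcd K L"] pp Mpos gpos by simp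
    have pK: "int p ^ \<kappa> dvd int K"
    proof -
      have "p ^ \<kappa> dvd K" unfolding \<kappa>_def by (rule multiplicity_dvd)
      then have "int (p ^ \<kappa>) dvd int K" by (simp only: of_nat_dvd_iff)
      then show ?thesis by simp
    qed
    show ?thesis
    proof (cases "\<mu> = 0")
      case True
      have "int p ^ \<nu> dvd int N"
      proof -
        have "p ^ \<nu> dvd N" unfolding \<nu>_def by (rule multiplicity_dvd)
        then have "int (p ^ \<nu>) dvd int N" by (simp only: of_nat_dvd_iff)
        then show ?thesis by simp
      qed
      then have "int p ^ \<nu> dvd A" "int p ^ \<nu> dvd B" using assms(4,5) unfolding A_def B_def
        by (meson dvd_trans)+
      then show ?thesis using True \<nu>_def \<mu>_def by auto
    next
      case False
      have pM: "p dvd M"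
      proof (rule ccontr)
        assume "\<not> p dvd M"
        then have "multiplicity p M = 0" by (rule not_dvd_imp_multiplicity_0)
        with False show False unfolding \<mu>_def by simp
      qed
      have lg: "lam = \<gamma>"
      proof -
        have L: "L = gcd K L * (L div gcd K L)" by simp
        have cop: "coprime M (L div gcd K L)" unfolding M_def
          using div_gcd_coprime assms(1) by blast
        have "\<not> p dvd L div gcd K L"
          using cop pM pp by (meson coprime_common_divisor not_prime_unit)
        then have "multiplicity p (L div gcd K L) = 0" by (rule not_dvd_imp_multiplicity_0)
        moreover have nz: "L div gcd K L \<noteq> 0"
        proof
          assume "L div gcd K L = 0"
          then have "gcd K L * (L div gcd K L) = 0" by simp
          with L assms(2) show False by simp
        qed
        ultimately show ?thesis unfolding lam_def \<gamma>_def
        proof -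
          have pe: "prime_elem p" using pp by (rule prime_imp_prime_elem)
          have g0: "gcd K L \<noteq> 0" using gpos by simp
          have "multiplicity p L = multiplicity p (gcd K L * (L div gcd K L))" by simp
          also have "\<dots> = multiplicity p (gcd K L) + multiplicity p (L div gcd K L)"
            by (rule prime_elem_multiplicity_mult_distrib[OF pe g0 nz])
          finally show "multiplicity p L = multiplicity p (gcd K L)"
            using \<open>multiplicity p (L div gcd K L) = 0\<close> by simp
        qed
      qed
      show ?thesis
      proof (cases "lam < \<nu>")
        case False
        have "int p ^ (\<nu> + \<mu>) dvd int p ^ \<kappa>"
          using False kap lg by (simp add: le_imp_power_dvd)
        then have "int p ^ (\<nu> + \<mu>) dvd int K" using pK by (rule dvd_trans)
        then show ?thesis using AB unfolding \<nu>_def \<mu>_def by (rule dvd_trans)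
      next
        case True
        obtain \<alpha> :: "nat \<Rightarrow> nat" where al: "\<forall>i<n. \<alpha> i \<le> lam \<and> int p ^ \<alpha> i dvd f i"
          and sal: "(\<Sum>i<n. \<alpha> i) \<ge> \<nu>"
          using assms(6) pp pM True unfolding M_def lam_def \<nu>_def by blast
        define g where "g i = f i div int p ^ \<alpha> i" for i
        define c where "c i = int K div int p ^ \<alpha> i" for i
        have fi: "f i = int p ^ \<alpha> i * g i" if "i < n" for i
          using al that unfolding g_def by simp
        have Kdiv: "int p ^ \<alpha> i * int p ^ \<mu> dvd int K" if "i < n" for i
        proof -
          have "int p ^ (\<alpha> i + \<mu>) dvd int p ^ \<kappa>"
            using al that kap lg by (intro le_imp_power_dvd) auto
          then show ?thesis using pK unfolding power_add by (rule dvd_trans)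
        qed
        have Ki: "int K = int p ^ \<alpha> i * c i" if "i < n" for i
        proof -
          have "int p ^ \<alpha> i dvd int K" using Kdiv[OF that] by (rule dvd_mult_left)
          then show ?thesis unfolding c_def by simp
        qed
        have ci: "int p ^ \<mu> dvd c i" if "i < n" for i
        proof -
          from Kdiv[OF that] obtain r where r: "int K = int p ^ \<alpha> i * int p ^ \<mu> * r"
            by (auto elim: dvdE)
          have "p > 0" using pp prime_gt_0_nat by blast
          then have "c i = int p ^ \<mu> * r" unfolding c_def r by simp
          then show ?thesis by simp
        qed
        have eA: "A = (\<Prod>i<n. int p ^ \<alpha> i * g i)"
          unfolding A_def by (rule prod.cong) (auto simp: fi)
        have eB: "B = (\<Prod>i<n. int p ^ \<alpha> i * (g i - d i * c i))"
          unfolding B_def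
        proof (rule prod.cong)
          fix i assume "i \<in> {..<n}"
          then have "i < n" by simp
          show "f i - d i * int K = int p ^ \<alpha> i * (g i - d i * c i)"
            using fi[OF \<open>i<n\<close>] Ki[OF \<open>i<n\<close>] by (simp add: algebra_simps)
        qed simp
        have "(\<Prod>i<n. int p ^ \<alpha> i) * int p ^ \<mu> dvd A - B"
          unfolding eA eB by (rule prod_diff_dvd) (auto intro: ci dvd_mult)
        moreover have "(\<Prod>i<n. int p ^ \<alpha> i) * int p ^ \<mu> = int p ^ ((\<Sum>i<n. \<alpha> i) + \<mu>)"
          by (simp add: power_sum power_add)
        moreover have "int p ^ (\<nu> + \<mu>) dvd int p ^ ((\<Sum>i<n. \<alpha> i) + \<mu>)"
          using sal by (intro le_imp_power_dvd) simp
        ultimately have "int p ^ (\<nu> + \<mu>) dvd A - B" by (metis dvd_trans)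
        then show ?thesis unfolding \<nu>_def \<mu>_def .
      qed
    qed
  qed
  have NM: "int (N * M) dvd A - B"
  proof (cases "A - B = 0")
    case True then show ?thesis by simp
  next
    case False
    show ?thesis
    proof (rule multiplicity_le_imp_dvd)
      show "int (N * M) \<noteq> 0" using assms(3) Mpos by simp
    next
      fix q :: int assume q: "prime q"
      define p where "p = nat q"
      have q0: "q > 0" using q by (rule prime_gt_0_int)
      have qp: "q = int p" using q0 unfolding p_def by simp
      have pp: "prime p" using q unfolding qp by simp
      have NM0: "N * M \<noteq> 0" using assms(3) Mpos by simp
      have pnu: "\<not> is_unit p" using pp using not_prime_unit by blast
      have qnu: "\<not> is_unit q" using q using not_prime_unit by blast
      define k where "k = multiplicity q (int (N * M))"
      have "q ^ k dvd int (N * M)" unfolding k_def by (rule multiplicity_dvd)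
      then have "int (p ^ k) dvd int (N * M)" unfolding qp by simp
      then have "p ^ k dvd N * M" by (simp only: of_nat_dvd_iff)
      then have "k \<le> multiplicity p (N * M)"
        by (rule multiplicity_geI[OF NM0 pnu])
      also have "\<dots> = multiplicity p N + multiplicity p M"
        using assms(3) Mpos pp by (intro prime_elem_multiplicity_mult_distrib) auto
      finally have kle: "k \<le> multiplicity p N + multiplicity p M" .
      have "q ^ k dvd q ^ (multiplicity p N + multiplicity p M)"
        using kle by (rule le_imp_power_dvd)
      then have "q ^ k dvd A - B" using key[OF pp] unfolding qp by (rule dvd_trans)
      then have "k \<le> multiplicity q (A - B)"
        by (rule multiplicity_geI[OF False qnu])
      then show "multiplicity q (int (N * M)) \<le> multiplicity q (A - B)" unfolding k_def .
    qed
  qed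
  obtain a where a: "A = int N * a" using assms(4) A_def by (auto elim: dvdE)
  obtain b where b: "B = int N * b" using assms(5) B_def by (auto elim: dvdE)
  have "int N * int M dvd int N * (a - b)" using NM a b by (simp add: algebra_simps)
  then have "int M dvd a - b" using assms(3) by simp
  moreover have "A div int N = a" "B div int N = b" using a b assms(3) by auto
  ultimately show ?thesis unfolding M_def A_def B_def by (simp add: cong_iff_dvd_diff)
qed

end
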